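(* Let $(p_n)$ be integers diverging to infinity and $(\kappa_n)$ an arbitrary sequence in $(0,\infty)$. (i) If $\kappa_n/p_n\to\infty$, then $e_{n1}=1+o(1)$, $\tilde e_{n2}=O(p_n/\kappa_n^2)$ and $f_{n2}=p_n/\kappa_n+o(p_n/\kappa_n)$. (ii) If $\kappa_n/p_n\to\xi>0$, then, with $c_\xi:=\frac12+\sqrt{\frac14+\xi^2}$, $e_{n1}\to\xi/c_\xi$, $\tilde e_{n2}=O(1/p_n)$ and $f_{n2}=1/c_\xi+o(1)$. (iii) If $\kappa_n/p_n\to0$, then $e_{n1}=\kappa_n/p_n+O(\kappa_n^3/p_n^3)$, $\tilde e_{n2}=1/p_n+o(1/p_n)$ and $f_{n2}=1+o(1)$.
   Context: For integer $p\ge2$ and $\kappa>0$, let $c_{p,\kappa}=1/\int_{-1}^1(1-t^2)^{(p-3)/2}e^{\kappa t}dt$. Let $U_n$ have density $u\mapsto c_{p_n,\kappa_n}(1-u^2)^{(p_n-3)/2}e^{\kappa_nu}$ on $[-1,1]$; $e_{n1}=E[U_n]$, $\tilde e_{n2}=\mathrm{Var}(U_n)$, $f_{n2}=E[1-U_n^2]$. *)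

theory Defs
  imports "HOL-Analysis.Analysis" "HOL-Library.Landau_Symbols"
begin

definition vmf_weight :: "nat \<Rightarrow> real \<Rightarrow> real \<Rightarrow> real" where
  "vmf_weight p \<kappa> t = (1 - t\<^sup>2) powr ((real p - 3) / 2) * exp (\<kappa> * t)"

definition vmf_const :: "nat \<Rightarrow> real \<Rightarrow> real" where
  "vmf_const p \<kappa> = 1 / (LBINT t:{-1..1}. vmf_weight p \<kappa> t)"

definition vmf_expect :: "nat \<Rightarrow> real \<Rightarrow> (real \<Rightarrow> real) \<Rightarrow> real" where
  "vmf_expect p \<kappa> g = (LBINT t:{-1..1}. g t * (vmf_const p \<kappa> * vmf_weight p \<kappa> t))"

definition e1 :: "nat \<Rightarrow> real \<Rightarrow> real" where
  "e1 p \<kappa> = vmf_expect p \<kappa> (\<lambda>t. t)"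

definition e2t :: "nat \<Rightarrow> real \<Rightarrow> real" where
  "e2t p \<kappa> = vmf_expect p \<kappa> (\<lambda>t. (t - e1 p \<kappa>)\<^sup>2)"

definition f2 :: "nat \<Rightarrow> real \<Rightarrow> real" where
  "f2 p \<kappa> = vmf_expect p \<kappa> (\<lambda>t. 1 - t\<^sup>2)"

end

theory Submission
  imports Defs
begin


lemma w_nonneg: "0 \<le> vmf_weight p \<kappa> t"
  unfolding vmf_weight_def by simp

lemma sq_le1: "(t::real) \<in> {-1..1} \<Longrightarrow> t\<^sup>2 \<le> 1"
  by (simp add: abs_square_le_1 abs_le_iff)

lemma w_cont: "4 \<le> p \<Longrightarrow> continuous_on {-1..1} (vmf_weight p \<kappa>)"
  unfolding vmf_weight_def
  by (intro continuous_intros continuous_on_powr') (auto dest: sq_le1)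

lemma LB_eq: "continuous_on {-1..1} f \<Longrightarrow> (LBINT t:{-1..1}. f t) = integral {-1..1} (f::real\<Rightarrow>real)"
  using set_borel_integral_eq_integral(2)[OF borel_integrable_atLeastAtMost'] by blast

definition Zk :: "nat \<Rightarrow> real \<Rightarrow> nat \<Rightarrow> real" where
  "Zk p \<kappa> k = integral {-1..1} (\<lambda>t. t^k * vmf_weight p \<kappa> t)"

lemma Zk_has: "4 \<le> p \<Longrightarrow> ((\<lambda>t. t^k * vmf_weight p \<kappa> t) has_integral Zk p \<kappa> k) {-1..1}"
  unfolding Zk_def
  by (intro integrable_integral integrable_continuous_interval continuous_intros w_cont)

lemma expect_eq:
  assumes "4 \<le> p" "continuous_on {-1..1} g"
  shows "vmf_expect p \<kappa> g = integral {-1..1} (\<lambda>t. g t * vmf_weight p \<kappa> t) / Zk p \<kappa> 0"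
proof -
  have c: "vmf_const p \<kappa> = 1 / Zk p \<kappa> 0"
    unfolding vmf_const_def Zk_def using LB_eq[OF w_cont[OF assms(1)]] by simp
  have "vmf_expect p \<kappa> g = integral {-1..1} (\<lambda>t. g t * (vmf_const p \<kappa> * vmf_weight p \<kappa> t))"
    unfolding vmf_expect_def
    by (intro LB_eq continuous_intros w_cont assms)
  also have "\<dots> = integral {-1..1} (\<lambda>t. vmf_const p \<kappa> * (g t * vmf_weight p \<kappa> t))"
    by (simp add: algebra_simps)
  also have "\<dots> = vmf_const p \<kappa> * integral {-1..1} (\<lambda>t. g t * vmf_weight p \<kappa> t)"
    by simp
  finally show ?thesis using c by simp
qed

lemma weight_shift:
  assumes "t \<in> {-1..1}"
  shows "vmf_weight (p+2) \<kappa> t = (1-t\<^sup>2) * vmf_weight p \<kappa> t"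
proof -
  have e: "(real (p+2) - 3)/2 = (real p - 3)/2 + 1" by (simp add: field_simps)
  have "0 \<le> 1 - t\<^sup>2" using sq_le1[OF assms] by simp
  then show ?thesis unfolding vmf_weight_def e powr_add by (simp add: powr_one)
qed

lemma w_deriv:
  assumes "t \<in> {-1<..<1}"
  shows "(vmf_weight (p+2) \<kappa> has_real_derivative
           (vmf_weight p \<kappa> t * (\<kappa>*(1-t\<^sup>2) - (real p - 1)*t))) (at t)"
proof -
  have pos: "1 - t\<^sup>2 > 0" using assms by (simp add: abs_square_less_1 abs_less_iff)
  have d1: "((\<lambda>t. 1 - t\<^sup>2) has_real_derivative (-2*t)) (at t)"
    by (auto intro!: derivative_eq_intros)
  have d2: "((\<lambda>t. (1 - t\<^sup>2) powr ((real p - 1)/2)) has_real_derivative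
     (((real p - 1)/2) * (1 - t\<^sup>2) powr ((real p - 1)/2 - of_nat 1) * (-2*t))) (at t)"
    by (rule DERIV_fun_powr[OF d1 pos])
  have d3: "((\<lambda>t. exp (\<kappa>*t)) has_real_derivative (exp (\<kappa>*t) * \<kappa>)) (at t)"
    by (auto intro!: derivative_eq_intros)
  note d4 = DERIV_mult[OF d2 d3]
  have eq: "vmf_weight (p+2) \<kappa> = (\<lambda>t. (1 - t\<^sup>2) powr ((real p - 1)/2) * exp (\<kappa>*t))"
    unfolding vmf_weight_def by (auto simp: field_simps)
  have e2: "(real p - 1)/2 - of_nat 1 = (real p - 3)/2" by (simp add: field_simps)
  have e3: "(1 - t\<^sup>2) powr ((real p - 1)/2) = (1-t\<^sup>2) * (1 - t\<^sup>2) powr ((real p - 3)/2)"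
  proof -
    have e: "(real p - 1)/2 = (real p - 3)/2 + 1" by (simp add: field_simps)
    show ?thesis using pos unfolding e powr_add by (simp add: powr_one)
  qed
  show ?thesis unfolding eq
    apply (rule DERIV_cong[OF d4])
    unfolding e2 e3 vmf_weight_def
    by (simp add: field_simps)
qed

lemma w_end: "vmf_weight (p+2) \<kappa> 1 = 0" "vmf_weight (p+2) \<kappa> (-1) = 0"
  unfolding vmf_weight_def by simp_all

lemma I1:
  assumes "4 \<le> p"
  shows "\<kappa>*(Zk p \<kappa> 0 - Zk p \<kappa> 2) = (real p - 1) * Zk p \<kappa> 1"
proof -
  have F: "((\<lambda>t. vmf_weight p \<kappa> t * (\<kappa>*(1-t\<^sup>2) - (real p - 1)*t)) has_integral
        (vmf_weight (p+2) \<kappa> 1 - vmf_weight (p+2) \<kappa> (-1))) {-1..1}"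
    apply (rule fundamental_theorem_of_calculus_interior)
      apply simp
     apply (rule w_cont) using assms apply simp
    by (erule w_deriv[unfolded has_real_derivative_iff_has_vector_derivative])
  have H: "((\<lambda>t. \<kappa>*(t^0* vmf_weight p \<kappa> t) - \<kappa>*(t^2* vmf_weight p \<kappa> t) - (real p - 1)*(t^1* vmf_weight p \<kappa> t))
     has_integral (\<kappa>*Zk p \<kappa> 0 - \<kappa>*Zk p \<kappa> 2 - (real p - 1)*Zk p \<kappa> 1)) {-1..1}"
    by (intro has_integral_diff has_integral_mult_right Zk_has assms)
  have eq: "(\<lambda>t. vmf_weight p \<kappa> t * (\<kappa>*(1-t\<^sup>2) - (real p - 1)*t)) =
     (\<lambda>t. \<kappa>*(t^0* vmf_weight p \<kappa> t) - \<kappa>*(t^2* vmf_weight p \<kappa> t) - (real p - 1)*(t^1* vmf_weight p \<kappa> t))"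
    by (rule ext) (simp add: algebra_simps power2_eq_square)
  have "0 = \<kappa>*Zk p \<kappa> 0 - \<kappa>*Zk p \<kappa> 2 - (real p - 1)*Zk p \<kappa> 1"
    using has_integral_unique[OF F[unfolded eq w_end] H] by simp
  then show ?thesis by (simp add: algebra_simps)
qed

lemma I2:
  assumes "4 \<le> p"
  shows "(Zk p \<kappa> 0 - Zk p \<kappa> 2) + \<kappa>*(Zk p \<kappa> 1 - Zk p \<kappa> 3) = (real p - 1) * Zk p \<kappa> 2"
proof -
  have D: "((\<lambda>t. t * vmf_weight (p+2) \<kappa> t) has_real_derivative
      ((1-t\<^sup>2)* vmf_weight p \<kappa> t + t*(vmf_weight p \<kappa> t * (\<kappa>*(1-t\<^sup>2) - (real p - 1)*t)))) (at t)"
    if t: "t \<in> {-1<..<1}" for t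
  proof -
    have "((\<lambda>t. t * vmf_weight (p+2) \<kappa> t) has_real_derivative
      (1 * vmf_weight (p+2) \<kappa> t + t*(vmf_weight p \<kappa> t * (\<kappa>*(1-t\<^sup>2) - (real p - 1)*t)))) (at t)"
      by (rule DERIV_cong[OF DERIV_mult'[OF DERIV_ident w_deriv[OF t]]]) simp
    moreover have "vmf_weight (p+2) \<kappa> t = (1-t\<^sup>2)* vmf_weight p \<kappa> t"
      using t by (intro weight_shift) auto
    ultimately show ?thesis by simp
  qed
  have F0: "((\<lambda>t. (1-t\<^sup>2)* vmf_weight p \<kappa> t + t*(vmf_weight p \<kappa> t * (\<kappa>*(1-t\<^sup>2) - (real p - 1)*t))) has_integral
        ((\<lambda>t. t * vmf_weight (p+2) \<kappa> t) 1 - (\<lambda>t. t * vmf_weight (p+2) \<kappa> t) (-1))) {-1..1}"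
    apply (rule fundamental_theorem_of_calculus_interior)
      apply simp
     apply (intro continuous_intros w_cont) using assms apply simp
    by (erule D[unfolded has_real_derivative_iff_has_vector_derivative])
  have F: "((\<lambda>t. (1-t\<^sup>2)* vmf_weight p \<kappa> t + t*(vmf_weight p \<kappa> t * (\<kappa>*(1-t\<^sup>2) - (real p - 1)*t))) has_integral
        0) {-1..1}"
    using F0 w_end by simp
  have H: "((\<lambda>t. (t^0* vmf_weight p \<kappa> t) - (t^2* vmf_weight p \<kappa> t) + \<kappa>*(t^1* vmf_weight p \<kappa> t)
       - \<kappa>*(t^3* vmf_weight p \<kappa> t) - (real p - 1)*(t^2* vmf_weight p \<kappa> t))
     has_integral (Zk p \<kappa> 0 - Zk p \<kappa> 2 + \<kappa>*Zk p \<kappa> 1 - \<kappa>*Zk p \<kappa> 3 - (real p - 1)*Zk p \<kappa> 2)) {-1..1}"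
    by (intro has_integral_diff has_integral_add has_integral_mult_right Zk_has assms)
  have eq: "(\<lambda>t. (1-t\<^sup>2)* vmf_weight p \<kappa> t + t*(vmf_weight p \<kappa> t * (\<kappa>*(1-t\<^sup>2) - (real p - 1)*t))) =
     (\<lambda>t. (t^0* vmf_weight p \<kappa> t) - (t^2* vmf_weight p \<kappa> t) + \<kappa>*(t^1* vmf_weight p \<kappa> t)
       - \<kappa>*(t^3* vmf_weight p \<kappa> t) - (real p - 1)*(t^2* vmf_weight p \<kappa> t))"
    by (rule ext) (simp add: algebra_simps power2_eq_square power3_eq_cube)
  have "0 = Zk p \<kappa> 0 - Zk p \<kappa> 2 + \<kappa>*Zk p \<kappa> 1 - \<kappa>*Zk p \<kappa> 3 - (real p - 1)*Zk p \<kappa> 2"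
    using has_integral_unique[OF F[unfolded eq] H] by simp
  then show ?thesis by (simp add: algebra_simps)
qed

lemma Zk_shift:
  assumes "4 \<le> p"
  shows "Zk (p+2) \<kappa> k = Zk p \<kappa> k - Zk p \<kappa> (k+2)"
proof -
  have "Zk (p+2) \<kappa> k = integral {-1..1} (\<lambda>t. t^k * vmf_weight p \<kappa> t - t^(k+2) * vmf_weight p \<kappa> t)"
    unfolding Zk_def
  proof (rule integral_cong)
    fix t :: real assume t: "t \<in> {-1..1}"
    show "t^k * vmf_weight (p+2) \<kappa> t = t^k * vmf_weight p \<kappa> t - t^(k+2) * vmf_weight p \<kappa> t"
      unfolding weight_shift[OF t] power_add by (simp add: algebra_simps)
  qed
  also have "\<dots> = Zk p \<kappa> k - Zk p \<kappa> (k+2)"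
    by (intro integral_unique has_integral_diff Zk_has assms)
  finally show ?thesis .
qed

lemma Z0_pos:
  assumes "4 \<le> p" "0 < \<kappa>"
  shows "Zk p \<kappa> 0 > 0"
proof -
  let ?w = "vmf_weight p \<kappa>"
  let ?c = "(3/4::real) powr ((real p - 3)/2)"
  have int: "?w integrable_on {0..1/2}"
    by (intro integrable_continuous_interval continuous_on_subset[OF w_cont[OF assms(1)]]) auto
  have lb: "?c \<le> ?w t" if "t \<in> {0..1/2}" for t :: real
  proof -
    have "t\<^sup>2 \<le> (1/2)\<^sup>2" using that by (intro power_mono) auto
    then have "3/4 \<le> 1 - t\<^sup>2" by (simp add: power2_eq_square)
    then have "?c \<le> (1 - t\<^sup>2) powr ((real p - 3)/2)"
      using assms by (intro powr_mono2) auto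
    moreover have "1 \<le> exp (\<kappa>*t)" using that assms by auto
    ultimately show ?thesis unfolding vmf_weight_def
      by (metis mult_mono mult.right_neutral powr_ge_zero zero_le_one order_trans)
  qed
  have "?c * (1/2) \<le> integral {0..1/2} ?w"
    using has_integral_le[OF has_integral_const_real[of ?c 0 "1/2"] integrable_integral[OF int]] lb
    by (simp add: mult.commute)
  also have "\<dots> \<le> integral {-1..1} ?w"
    by (intro integral_subset_le int integrable_continuous_interval w_cont assms) (auto simp: w_nonneg)
  also have "\<dots> = Zk p \<kappa> 0" unfolding Zk_def by simp
  finally have "?c * (1/2) \<le> Zk p \<kappa> 0" .
  moreover have "0 < ?c * (1/2)" by simp
  ultimately show ?thesis by linarith
qed

lemma core:
  assumes q: "4 \<le> q" and k: "0 < \<kappa>"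
  shows "\<kappa> * f2 q \<kappa> = (real q - 1) * e1 q \<kappa>"
    and "e2t q \<kappa> = 1 - f2 q \<kappa> - (e1 q \<kappa>)\<^sup>2"
    and "e1 q \<kappa> = \<kappa> / (real q + \<kappa> * e1 (q+2) \<kappa>)"
    and "0 \<le> e1 q \<kappa>" and "e1 q \<kappa> \<le> 1" and "0 \<le> e2t q \<kappa>"
proof -
  define Z0 Z1 Z2 Z3 where "Z0 = Zk q \<kappa> 0" and "Z1 = Zk q \<kappa> 1" and "Z2 = Zk q \<kappa> 2" and "Z3 = Zk q \<kappa> 3"
  let ?w = "vmf_weight q \<kappa>"
  have Z0p: "Z0 > 0" unfolding Z0_def using Z0_pos q k by blast
  have Z02p: "Z0 - Z2 > 0"
  proof -
    have "Zk (q+2) \<kappa> 0 > 0" using Z0_pos[of "q+2" \<kappa>] q k by simp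
    then show ?thesis using Zk_shift[OF q, of \<kappa> 0] unfolding Z0_def Z2_def add_0 by linarith
  qed
  have i1: "\<kappa>*(Z0 - Z2) = (real q - 1) * Z1" unfolding Z0_def Z1_def Z2_def using I1[OF q] .
  have i2: "(Z0 - Z2) + \<kappa>*(Z1 - Z3) = (real q - 1) * Z2" unfolding Z0_def Z1_def Z2_def Z3_def using I2[OF q] .
  have hA: "e1 q \<kappa> = Z1 / Z0"
  proof -
    have "e1 q \<kappa> = integral {-1..1} (\<lambda>t. t * ?w t) / Zk q \<kappa> 0"
      unfolding e1_def by (rule expect_eq[OF q]) (intro continuous_intros)
    also have "integral {-1..1} (\<lambda>t. t * ?w t) = Z1" unfolding Z1_def Zk_def by simp
    finally show ?thesis unfolding Z0_def .
  qed
  have hB: "e1 (q+2) \<kappa> = (Z1 - Z3) / (Z0 - Z2)"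
  proof -
    have "e1 (q+2) \<kappa> = integral {-1..1} (\<lambda>t. t * vmf_weight (q+2) \<kappa> t) / Zk (q+2) \<kappa> 0"
      unfolding e1_def by (rule expect_eq) (use q in \<open>auto intro!: continuous_intros\<close>)
    also have "integral {-1..1} (\<lambda>t. t * vmf_weight (q+2) \<kappa> t) = Zk (q+2) \<kappa> 1" unfolding Zk_def by simp
    moreover have "Zk (q+2) \<kappa> 0 = Z0 - Z2" using Zk_shift[OF q, of \<kappa> 0] unfolding Z0_def Z2_def add_0 .
    moreover have "(1::nat) + 2 = 3" by simp
    then have "Zk (q+2) \<kappa> 1 = Z1 - Z3" using Zk_shift[OF q, of \<kappa> 1] unfolding Z1_def Z3_def by metis
    ultimately show ?thesis by simp
  qed
  have hf: "f2 q \<kappa> = (Z0 - Z2) / Z0"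
  proof -
    have "f2 q \<kappa> = integral {-1..1} (\<lambda>t. (1 - t\<^sup>2) * ?w t) / Zk q \<kappa> 0"
      unfolding f2_def by (rule expect_eq[OF q]) (intro continuous_intros)
    also have "integral {-1..1} (\<lambda>t. (1 - t\<^sup>2) * ?w t) = Z0 - Z2"
    proof -
      have "((\<lambda>t. t^0 * ?w t - t^2 * ?w t) has_integral (Z0 - Z2)) {-1..1}"
        unfolding Z0_def Z2_def by (intro has_integral_diff Zk_has q)
      moreover have "(\<lambda>t. t^0 * ?w t - t^2 * ?w t) = (\<lambda>t. (1 - t\<^sup>2) * ?w t)"
        by (rule ext) (simp add: algebra_simps)
      ultimately show ?thesis by (simp add: integral_unique)
    qed
    finally show ?thesis unfolding Z0_def .
  qed
  define A where "A = Z1 / Z0"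
  have hV: "e2t q \<kappa> = (Z2 - 2*A*Z1 + A\<^sup>2*Z0) / Z0" and Vnn: "0 \<le> Z2 - 2*A*Z1 + A\<^sup>2*Z0"
  proof -
    have HI: "((\<lambda>t. t^2 * ?w t - (2*A) * (t^1 * ?w t) + A\<^sup>2 * (t^0 * ?w t)) has_integral
          (Z2 - 2*A*Z1 + A\<^sup>2*Z0)) {-1..1}"
      unfolding Z0_def Z1_def Z2_def by (intro has_integral_diff has_integral_add has_integral_mult_right Zk_has q)
    have eq: "(\<lambda>t. t^2 * ?w t - (2*A) * (t^1 * ?w t) + A\<^sup>2 * (t^0 * ?w t)) = (\<lambda>t. (t - A)\<^sup>2 * ?w t)"
      by (rule ext) (simp add: algebra_simps power2_eq_square)
    have "e2t q \<kappa> = integral {-1..1} (\<lambda>t. (t - e1 q \<kappa>)\<^sup>2 * ?w t) / Zk q \<kappa> 0"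
      unfolding e2t_def by (rule expect_eq[OF q]) (intro continuous_intros)
    also have "integral {-1..1} (\<lambda>t. (t - e1 q \<kappa>)\<^sup>2 * ?w t) = Z2 - 2*A*Z1 + A\<^sup>2*Z0"
      using HI unfolding eq hA A_def[symmetric] by (simp add: integral_unique)
    finally show "e2t q \<kappa> = (Z2 - 2*A*Z1 + A\<^sup>2*Z0) / Z0" unfolding Z0_def .
    show "0 \<le> Z2 - 2*A*Z1 + A\<^sup>2*Z0"
      using HI unfolding eq by (rule has_integral_nonneg) (simp add: w_nonneg)
  qed
  have Z1le: "Z1 \<le> Z0"
    unfolding Z0_def Z1_def
    by (rule has_integral_le[OF Zk_has[OF q] Zk_has[OF q]])
       (use mult_right_mono[OF _ w_nonneg, of _ 1] in simp)
  have q1: "real q - 1 > 0" using q by simp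
  have Z1nn: "0 \<le> Z1"
  proof -
    have "0 \<le> \<kappa>*(Z0 - Z2)" using k Z02p by simp
    then show ?thesis using i1 q1 by (simp add: zero_le_mult_iff)
  qed
  show "\<kappa> * f2 q \<kappa> = (real q - 1) * e1 q \<kappa>"
    unfolding hf hA using i1 by (simp add: field_simps)
  show "e2t q \<kappa> = 1 - f2 q \<kappa> - (e1 q \<kappa>)\<^sup>2"
    unfolding hV hf hA A_def using Z0p by (simp add: field_simps power2_eq_square)
  show "0 \<le> e1 q \<kappa>" unfolding hA using Z1nn Z0p by simp
  show "e1 q \<kappa> \<le> 1" unfolding hA using Z1le Z0p by simp
  show "0 \<le> e2t q \<kappa>" unfolding hV using Vnn Z0p by simp
  show "e1 q \<kappa> = \<kappa> / (real q + \<kappa> * e1 (q+2) \<kappa>)"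
  proof -
    have "\<kappa> * e1 (q+2) \<kappa> = ((real q - 1) * Z2 - (Z0 - Z2)) / (Z0 - Z2)"
      unfolding hB using i2 Z02p by (simp add: field_simps)
    then have "real q + \<kappa> * e1 (q+2) \<kappa> = (real q - 1) * Z0 / (Z0 - Z2)"
      using Z02p by (simp add: field_simps)
    then have "\<kappa> / (real q + \<kappa> * e1 (q+2) \<kappa>) = \<kappa> * (Z0 - Z2) / ((real q - 1) * Z0)"
      by simp
    also have "\<dots> = Z1 / Z0" unfolding i1 using q1 by simp
    finally show ?thesis unfolding hA by simp
  qed
qed

lemma var_rec:
  assumes q: "4 \<le> q" and k: "0 < \<kappa>"
  shows "e2t q \<kappa> = (real q - \<kappa>\<^sup>2 * e2t (q+2) \<kappa>) / (real q + \<kappa> * e1 (q+2) \<kappa>)\<^sup>2"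
proof -
  define A B where "A = e1 q \<kappa>" and "B = e1 (q+2) \<kappa>"
  have q2: "4 \<le> q + 2" using q by simp
  note c0 = core[OF q k] and c2 = core[OF q2 k]
  have Bnn: "0 \<le> B" using c2(4) B_def by simp
  define D where "D = real q + \<kappa> * B"
  have Dp: "D > 0" unfolding D_def using q k Bnn by (simp add: add_pos_nonneg)
  have hA: "A = \<kappa> / D" unfolding A_def D_def B_def by (rule c0(3))
  have f0: "f2 q \<kappa> = (real q - 1) * A / \<kappa>" using c0(1) k unfolding A_def by (simp add: field_simps)
  have f2': "f2 (q+2) \<kappa> = (real q + 1) * B / \<kappa>" using c2(1) k unfolding B_def by (simp add: field_simps)
  have V0: "e2t q \<kappa> = 1 - (real q - 1) / D - \<kappa>\<^sup>2 / D\<^sup>2"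
    using c0(2) unfolding f0 A_def[symmetric] hA using k by (simp add: power_divide)
  have V2: "\<kappa>\<^sup>2 * e2t (q+2) \<kappa> = \<kappa>\<^sup>2 - (real q + 1) * (\<kappa> * B) - (\<kappa>*B)\<^sup>2"
  proof -
    have H: "e2t (q+2) \<kappa> = 1 - (real q + 1) * B / \<kappa> - B\<^sup>2"
      using c2(2) unfolding f2' B_def[symmetric] .
    have e: "\<kappa>\<^sup>2 * ((real q + 1) * B / \<kappa>) = (real q + 1) * (\<kappa> * B)"
      using k by (simp add: power2_eq_square)
    show ?thesis unfolding H right_diff_distrib e by (simp add: power_mult_distrib)
  qed
  have "e2t q \<kappa> * D\<^sup>2 = D\<^sup>2 - (real q - 1) * D - \<kappa>\<^sup>2"
    unfolding V0 using Dp by (simp add: field_simps power2_eq_square)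
  also have "\<dots> = real q - \<kappa>\<^sup>2 * e2t (q+2) \<kappa>"
    unfolding V2 D_def by (simp add: algebra_simps power2_eq_square)
  finally show ?thesis unfolding D_def[symmetric] B_def[symmetric] using Dp by (simp add: field_simps)
qed

lemma var_le:
  assumes q: "4 \<le> q" and k: "0 < \<kappa>"
  shows "e2t q \<kappa> \<le> real q / (real q + \<kappa> * e1 (q+2) \<kappa>)\<^sup>2" and "e2t q \<kappa> \<le> 1 / real q"
proof -
  have q2: "4 \<le> q + 2" using q by simp
  have Bnn: "0 \<le> e1 (q+2) \<kappa>" using core(4)[OF q2 k] .
  have V2: "0 \<le> e2t (q+2) \<kappa>" using core(6)[OF q2 k] .
  have Dp: "real q + \<kappa> * e1 (q+2) \<kappa> \<ge> real q" using Bnn k by simp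
  have qp: "real q > 0" using q by simp
  show 1: "e2t q \<kappa> \<le> real q / (real q + \<kappa> * e1 (q+2) \<kappa>)\<^sup>2"
    unfolding var_rec[OF q k] using V2 Dp qp
    by (intro divide_right_mono) (auto simp: mult_nonneg_nonneg)
  also have "\<dots> \<le> real q / (real q)\<^sup>2"
    using Dp qp by (intro divide_left_mono power_mono mult_pos_pos) auto
  also have "\<dots> = 1 / real q" by (simp add: power2_eq_square)
  finally show "e2t q \<kappa> \<le> 1 / real q" .
qed

lemma quad_bound:
  fixes a b :: real
  assumes "0 \<le> a" "0 \<le> b" "a\<^sup>2 + b*a \<le> 1"
  shows "a \<le> 2 / (b + sqrt (b\<^sup>2 + 4))"
proof -
  define S where "S = sqrt (b\<^sup>2 + 4)"
  have S2: "S\<^sup>2 = b\<^sup>2 + 4" unfolding S_def by simp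
  have Sb: "S > b" unfolding S_def using assms(2)
    by (metis add_less_cancel_left power2_less_imp_less real_sqrt_ge_zero real_sqrt_pow2 sqrt_le_D
        zero_le_power2 zero_less_numeral less_add_same_cancel1 not_le)
  have eq: "2 / (b + S) = (S - b) / 2"
    using Sb assms(2) S2 by (simp add: field_simps power2_eq_square)
  have "a \<le> (S - b) / 2"
  proof (rule ccontr)
    assume "\<not> ?thesis"
    then have h: "a > (S - b)/2" by simp
    have "a\<^sup>2 + b*a > ((S-b)/2)\<^sup>2 + b*((S-b)/2)"
      using h Sb assms(2) by (intro add_less_le_mono power_strict_mono mult_left_mono) auto
    also have "((S-b)/2)\<^sup>2 + b*((S-b)/2) = 1" using S2 by (simp add: field_simps power2_eq_square)
    finally show False using assms(3) by simp
  qed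
  then show ?thesis using eq unfolding S_def by simp
qed

definition Ub :: "real \<Rightarrow> real" where "Ub b = 2 / (b + sqrt (b\<^sup>2 + 4))"

lemma pw:
  assumes p: "4 \<le> p" and k: "0 < \<kappa>"
  shows "e1 p \<kappa> \<le> \<kappa> / real p"
    and "\<kappa> / real p - e1 p \<kappa> \<le> (\<kappa> / real p)^3"
    and "(1 - (\<kappa> / real p)\<^sup>2) / (1 + (\<kappa> / real p)\<^sup>2)\<^sup>2 \<le> real p * e2t p \<kappa>"
    and "(1 - 1 / real p) / (1 + (\<kappa> / real p)\<^sup>2) \<le> f2 p \<kappa>"
    and "f2 p \<kappa> \<le> 1"
    and "f2 p \<kappa> = (real p - 1) / \<kappa> * e1 p \<kappa>"
    and "\<kappa> / (real p + \<kappa>) \<le> e1 p \<kappa>"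
    and "\<kappa> / (real p + 2 + \<kappa>) \<le> e1 (p+2) \<kappa>"
    and "e2t p \<kappa> \<le> real p / (\<kappa> * e1 (p+2) \<kappa>)\<^sup>2"
    and "e1 p \<kappa> \<le> Ub ((real p - 1) / \<kappa>)"
    and "1 / (real p / \<kappa> + Ub ((real p + 1) / \<kappa>)) \<le> e1 p \<kappa>"
proof -
  have p2: "4 \<le> p + 2" and p4: "4 \<le> p + 4" using p by simp_all
  define A B C where "A = e1 p \<kappa>" and "B = e1 (p+2) \<kappa>" and "C = e1 (p+4) \<kappa>"
  define r where "r = \<kappa> / real p"
  have pp: "real p > 0" using p by simp
  note c0 = core[OF p k] and c2 = core[OF p2 k] and c4 = core[OF p4 k]
  have hA: "A = \<kappa> / (real p + \<kappa> * B)" unfolding A_def B_def by (rule c0(3))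
  have hB: "B = \<kappa> / (real p + 2 + \<kappa> * C)"
  proof -
    have e: "p + 2 + 2 = p + 4" by simp
    have e2: "real (p+2) = real p + 2" by simp
    show ?thesis using c2(3) unfolding B_def C_def e e2 .
  qed
  have B0: "0 \<le> B" and B1: "B \<le> 1" unfolding B_def using c2(4,5) by auto
  have C0: "0 \<le> C" and C1: "C \<le> 1" unfolding C_def using c4(4,5) by auto
  have kB0: "0 \<le> \<kappa> * B" using k B0 by simp
  have Bub: "B \<le> \<kappa> / real p" unfolding hB using k C0 pp
    by (intro divide_left_mono) (auto intro!: add_pos_nonneg mult_pos_pos)
  have kBub: "\<kappa> * B \<le> real p * r\<^sup>2"
  proof -
    have "\<kappa> * B \<le> \<kappa> * (\<kappa> / real p)" using Bub k by (intro mult_left_mono) auto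
    also have "\<dots> = real p * r\<^sup>2" unfolding r_def using pp by (simp add: power2_eq_square)
    finally show ?thesis .
  qed
  show 1: "e1 p \<kappa> \<le> \<kappa> / real p"
    unfolding A_def[symmetric] hA using k kB0 pp by (intro divide_left_mono) auto
  show "\<kappa> / real p - e1 p \<kappa> \<le> (\<kappa> / real p)^3"
  proof -
    have "\<kappa> / real p - A = \<kappa> * (\<kappa> * B) / (real p * (real p + \<kappa> * B))"
      unfolding hA using pp kB0 by (simp add: field_simps)
    also have "\<dots> \<le> \<kappa> * (\<kappa> * B) / (real p * real p)"
      using pp kB0 k by (intro divide_left_mono mult_left_mono mult_pos_pos) auto
    also have "\<dots> \<le> \<kappa> * (\<kappa> * (\<kappa> / real p)) / (real p * real p)"
      using Bub k pp by (intro divide_right_mono mult_left_mono) auto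
    also have "\<dots> = (\<kappa> / real p)^3" by (simp add: power3_eq_cube)
    finally show ?thesis unfolding A_def .
  qed
  have f0: "f2 p \<kappa> = (real p - 1) / \<kappa> * A" using c0(1) k unfolding A_def by (simp add: field_simps)
  show "f2 p \<kappa> = (real p - 1) / \<kappa> * e1 p \<kappa>" using f0 A_def by simp
  have f0': "f2 p \<kappa> = (real p - 1) / (real p + \<kappa> * B)" unfolding f0 hA using k by simp
  show "f2 p \<kappa> \<le> 1" unfolding f0' using kB0 pp by (simp add: divide_le_eq)
  show "(1 - 1 / real p) / (1 + (\<kappa> / real p)\<^sup>2) \<le> f2 p \<kappa>"
  proof -
    have "(1 - 1 / real p) / (1 + r\<^sup>2) = (real p - 1) / (real p + real p * r\<^sup>2)"
      using pp by (simp add: field_simps)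
    also have "\<dots> \<le> (real p - 1) / (real p + \<kappa> * B)"
      using kBub pp p kB0 by (intro divide_left_mono) auto
    finally show ?thesis unfolding f0' r_def .
  qed
  have V0: "0 \<le> e2t (p+2) \<kappa>" using c2(6) .
  have V2le: "e2t (p+2) \<kappa> \<le> 1 / real p"
  proof -
    have "e2t (p+2) \<kappa> \<le> 1 / real (p+2)" using var_le(2)[OF p2 k] .
    also have "\<dots> \<le> 1 / real p" using pp by (intro divide_left_mono) auto
    finally show ?thesis .
  qed
  show "(1 - (\<kappa> / real p)\<^sup>2) / (1 + (\<kappa> / real p)\<^sup>2)\<^sup>2 \<le> real p * e2t p \<kappa>"
  proof (cases "r\<^sup>2 \<le> 1")
    case False
    then have "(1 - r\<^sup>2) / (1 + r\<^sup>2)\<^sup>2 \<le> 0" by (intro divide_nonpos_nonneg) auto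
    also have "0 \<le> real p * e2t p \<kappa>" using c0(6) pp by simp
    finally show ?thesis unfolding r_def .
  next
    case True
    have num: "real p * (real p - real p * r\<^sup>2) \<le> real p * (real p - \<kappa>\<^sup>2 * e2t (p+2) \<kappa>)"
    proof -
      have "\<kappa>\<^sup>2 * e2t (p+2) \<kappa> \<le> \<kappa>\<^sup>2 * (1 / real p)" using V2le by (intro mult_left_mono) auto
      also have "\<dots> = real p * r\<^sup>2" unfolding r_def using pp by (simp add: power2_eq_square)
      finally show ?thesis using pp by (intro mult_left_mono) auto
    qed
    have e1: "real p * (real p - real p * r\<^sup>2) = (real p)\<^sup>2 * (1 - r\<^sup>2)"
      by (simp add: algebra_simps power2_eq_square)
    have e2: "(real p + real p * r\<^sup>2)\<^sup>2 = (real p)\<^sup>2 * (1 + r\<^sup>2)\<^sup>2"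
      by (simp add: algebra_simps power2_eq_square)
    have "(1 - r\<^sup>2) / (1 + r\<^sup>2)\<^sup>2 = real p * (real p - real p * r\<^sup>2) / (real p + real p * r\<^sup>2)\<^sup>2"
      unfolding e1 e2 using pp by simp
    also have "\<dots> \<le> real p * (real p - real p * r\<^sup>2) / (real p + \<kappa> * B)\<^sup>2"
      using True pp kB0 kBub
      by (intro divide_left_mono power_mono mult_nonneg_nonneg mult_pos_pos) (auto simp: algebra_simps)
    also have "\<dots> \<le> real p * (real p - \<kappa>\<^sup>2 * e2t (p+2) \<kappa>) / (real p + \<kappa> * B)\<^sup>2"
      using num by (intro divide_right_mono) auto
    also have "\<dots> = real p * e2t p \<kappa>" unfolding var_rec[OF p k] B_def by simp
    finally show ?thesis unfolding r_def .
  qed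
  show "\<kappa> / (real p + \<kappa>) \<le> e1 p \<kappa>"
    unfolding A_def[symmetric] hA using k B1 pp kB0 by (intro divide_left_mono) auto
  show Blow: "\<kappa> / (real p + 2 + \<kappa>) \<le> e1 (p+2) \<kappa>"
    unfolding B_def[symmetric] hB using k C1 pp C0 by (intro divide_left_mono add_pos_nonneg mult_pos_pos) auto
  have "0 < \<kappa> / (real p + 2 + \<kappa>)" using k pp by simp
  then have Bpos: "0 < B" using Blow B_def by linarith
  show "e2t p \<kappa> \<le> real p / (\<kappa> * e1 (p+2) \<kappa>)\<^sup>2"
  proof (cases "\<kappa> * B = 0")
    case True
    then show ?thesis using Bpos k by simp
  next
    case False
    have "\<kappa> * B > 0" using Bpos k by simp
    have "e2t p \<kappa> \<le> real p / (real p + \<kappa> * B)\<^sup>2" using var_le(1)[OF p k] B_def by simp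
    also have "\<dots> \<le> real p / (\<kappa> * B)\<^sup>2"
      using \<open>\<kappa> * B > 0\<close> pp by (intro divide_left_mono power_mono mult_pos_pos) auto
    finally show ?thesis unfolding B_def .
  qed
  show "e1 p \<kappa> \<le> Ub ((real p - 1) / \<kappa>)"
    unfolding Ub_def
  proof (rule quad_bound)
    show "0 \<le> e1 p \<kappa>" using c0(4) .
    show "0 \<le> (real p - 1) / \<kappa>" using p k by simp
    show "(e1 p \<kappa>)\<^sup>2 + (real p - 1) / \<kappa> * e1 p \<kappa> \<le> 1"
      using c0(2,6) f0 A_def by simp
  qed
  have BU: "B \<le> Ub ((real p + 1) / \<kappa>)"
    unfolding Ub_def
  proof (rule quad_bound)
    show "0 \<le> B" using B0 .
    show "0 \<le> (real p + 1) / \<kappa>" using p k by simp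
    have "f2 (p+2) \<kappa> = (real p + 1) / \<kappa> * B" using c2(1) k unfolding B_def by (simp add: field_simps)
    then show "B\<^sup>2 + (real p + 1) / \<kappa> * B \<le> 1"
      using c2(2,6) B_def by simp
  qed
  show "1 / (real p / \<kappa> + Ub ((real p + 1) / \<kappa>)) \<le> e1 p \<kappa>"
  proof -
    have "1 / (real p / \<kappa> + Ub ((real p + 1) / \<kappa>)) = \<kappa> / (real p + \<kappa> * Ub ((real p + 1) / \<kappa>))"
      using k by (simp add: field_simps)
    also have "\<dots> \<le> \<kappa> / (real p + \<kappa> * B)"
    proof -
      have "0 \<le> \<kappa> * Ub ((real p + 1) / \<kappa>)" using BU B0 k by simp
      then show ?thesis
        using k BU pp kB0 by (intro divide_left_mono mult_left_mono add_pos_nonneg mult_pos_pos) auto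
    qed
    finally show ?thesis using hA A_def by simp
  qed
qed

lemma ev4:
  assumes "filterlim p at_top sequentially"
  shows "eventually (\<lambda>n. 4 \<le> (p::nat\<Rightarrow>nat) n) sequentially"
  using assms unfolding filterlim_at_top by auto

lemma inv_p0:
  assumes "filterlim p at_top sequentially"
  shows "((\<lambda>n. 1 / real ((p::nat\<Rightarrow>nat) n)) \<longlonglongrightarrow> 0)"
proof -
  have "filterlim (\<lambda>n. real (p n)) at_top sequentially"
    by (rule filterlim_compose[OF filterlim_real_sequentially assms])
  from tendsto_inverse_0_at_top[OF this] show ?thesis by (simp add: inverse_eq_divide)
qed

lemma regime_iii:
  fixes p :: "nat \<Rightarrow> nat" and \<kappa> :: "nat \<Rightarrow> real"
  assumes p_div: "filterlim p at_top sequentially"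
    and \<kappa>_pos: "\<And>n. \<kappa> n > 0"
    and r0: "((\<lambda>n. \<kappa> n / real (p n)) \<longlonglongrightarrow> 0)"
  shows "(\<lambda>n. e1 (p n) (\<kappa> n) - \<kappa> n / real (p n)) \<in> O[sequentially](\<lambda>n. (\<kappa> n / real (p n)) ^ 3)"
    and "(\<lambda>n. e2t (p n) (\<kappa> n) - 1 / real (p n)) \<in> o[sequentially](\<lambda>n. 1 / real (p n))"
    and "(\<lambda>n. f2 (p n) (\<kappa> n)) \<longlonglongrightarrow> 1"
proof -
  note E = ev4[OF p_div]
  define r where "r n = \<kappa> n / real (p n)" for n
  have rpos: "eventually (\<lambda>n. r n > 0) sequentially"
    using E by eventually_elim (use \<kappa>_pos in \<open>simp add: r_def\<close>)
  show "(\<lambda>n. e1 (p n) (\<kappa> n) - \<kappa> n / real (p n)) \<in> O[sequentially](\<lambda>n. (\<kappa> n / real (p n)) ^ 3)"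
  proof (rule bigoI[where c=1])
    show "eventually (\<lambda>n. norm (e1 (p n) (\<kappa> n) - \<kappa> n / real (p n)) \<le> 1 * norm ((\<kappa> n / real (p n)) ^ 3)) sequentially"
      using E rpos
    proof eventually_elim
      case (elim n)
      note a = pw(1,2)[OF elim(1) \<kappa>_pos[of n]]
      have "norm (e1 (p n) (\<kappa> n) - \<kappa> n / real (p n)) \<le> (\<kappa> n / real (p n))^3"
        using a by simp
      also have "\<dots> = norm ((\<kappa> n / real (p n)) ^ 3)" using elim(2) unfolding r_def by simp
      finally show ?case by simp
    qed
  qed
  have lo: "((\<lambda>n. (1 - (r n)\<^sup>2) / (1 + (r n)\<^sup>2)\<^sup>2) \<longlonglongrightarrow> 1)"
    using r0 unfolding r_def[symmetric] by (auto intro!: tendsto_eq_intros)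
  have pV: "((\<lambda>n. real (p n) * e2t (p n) (\<kappa> n)) \<longlonglongrightarrow> 1)"
  proof (rule tendsto_sandwich[OF _ _ lo tendsto_const])
    show "eventually (\<lambda>n. (1 - (r n)\<^sup>2) / (1 + (r n)\<^sup>2)\<^sup>2 \<le> real (p n) * e2t (p n) (\<kappa> n)) sequentially"
      using E by eventually_elim (use pw(3) \<kappa>_pos in \<open>auto simp: r_def\<close>)
    show "eventually (\<lambda>n. real (p n) * e2t (p n) (\<kappa> n) \<le> 1) sequentially"
      using E
    proof eventually_elim
      case (elim n)
      then have "e2t (p n) (\<kappa> n) \<le> 1 / real (p n)" using var_le(2) \<kappa>_pos by blast
      then show ?case using elim by (simp add: field_simps)
    qed
  qed
  show "(\<lambda>n. e2t (p n) (\<kappa> n) - 1 / real (p n)) \<in> o[sequentially](\<lambda>n. 1 / real (p n))"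
  proof (rule smalloI_tendsto)
    have "((\<lambda>n. real (p n) * e2t (p n) (\<kappa> n) - 1) \<longlonglongrightarrow> 0)"
      using tendsto_diff[OF pV tendsto_const[of 1]] by simp
    moreover have "eventually (\<lambda>n. real (p n) * e2t (p n) (\<kappa> n) - 1 =
        (e2t (p n) (\<kappa> n) - 1 / real (p n)) / (1 / real (p n))) sequentially"
      using E by eventually_elim (simp add: field_simps)
    ultimately show "((\<lambda>n. (e2t (p n) (\<kappa> n) - 1 / real (p n)) / (1 / real (p n))) \<longlonglongrightarrow> 0)"
      using tendsto_cong by fastforce
    show "eventually (\<lambda>n. 1 / real (p n) \<noteq> 0) sequentially"
      using E by eventually_elim simp
  qed
  have r0': "r \<longlonglongrightarrow> 0" using r0 unfolding r_def[symmetric] .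
  have "((\<lambda>n. (1 - 1 / real (p n)) / (1 + (r n)\<^sup>2)) \<longlonglongrightarrow> (1 - 0) / (1 + 0\<^sup>2))"
    by (intro tendsto_divide tendsto_diff tendsto_add tendsto_power tendsto_const inv_p0[OF p_div] r0') simp
  then have lo2: "((\<lambda>n. (1 - 1 / real (p n)) / (1 + (r n)\<^sup>2)) \<longlonglongrightarrow> 1)" by simp
  show "(\<lambda>n. f2 (p n) (\<kappa> n)) \<longlonglongrightarrow> 1"
  proof (rule tendsto_sandwich[OF _ _ lo2 tendsto_const])
    show "eventually (\<lambda>n. (1 - 1 / real (p n)) / (1 + (r n)\<^sup>2) \<le> f2 (p n) (\<kappa> n)) sequentially"
      using E by eventually_elim (use pw(4) \<kappa>_pos in \<open>auto simp: r_def\<close>)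
    show "eventually (\<lambda>n. f2 (p n) (\<kappa> n) \<le> 1) sequentially"
      using E by eventually_elim (use pw(5) \<kappa>_pos in auto)
  qed
qed

lemma regime_i:
  fixes p :: "nat \<Rightarrow> nat" and \<kappa> :: "nat \<Rightarrow> real"
  assumes p_div: "filterlim p at_top sequentially"
    and \<kappa>_pos: "\<And>n. \<kappa> n > 0"
    and rinf: "filterlim (\<lambda>n. \<kappa> n / real (p n)) at_top sequentially"
  shows "(\<lambda>n. e1 (p n) (\<kappa> n)) \<longlonglongrightarrow> 1"
    and "(\<lambda>n. e2t (p n) (\<kappa> n)) \<in> O[sequentially](\<lambda>n. real (p n) / (\<kappa> n)\<^sup>2)"
    and "(\<lambda>n. f2 (p n) (\<kappa> n) - real (p n) / \<kappa> n) \<in> o[sequentially](\<lambda>n. real (p n) / \<kappa> n)"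
proof -
  note E = ev4[OF p_div]
  define r where "r n = \<kappa> n / real (p n)" for n
  have ir: "((\<lambda>n. inverse (r n)) \<longlonglongrightarrow> 0)"
    using tendsto_inverse_0_at_top[OF rinf] unfolding r_def .
  have r2: "eventually (\<lambda>n. r n \<ge> 2) sequentially"
    using rinf unfolding filterlim_at_top r_def by auto
  have "((\<lambda>n. 1 / (inverse (r n) + 1)) \<longlonglongrightarrow> 1 / (0 + 1))"
    by (intro tendsto_divide tendsto_add tendsto_const ir) simp
  then have lo: "((\<lambda>n. 1 / (inverse (r n) + 1)) \<longlonglongrightarrow> 1)" by simp
  show A1: "(\<lambda>n. e1 (p n) (\<kappa> n)) \<longlonglongrightarrow> 1"
  proof (rule tendsto_sandwich[OF _ _ lo tendsto_const])
    show "eventually (\<lambda>n. 1 / (inverse (r n) + 1) \<le> e1 (p n) (\<kappa> n)) sequentially"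
      using E
    proof eventually_elim
      case (elim n)
      have "1 / (inverse (r n) + 1) = \<kappa> n / (real (p n) + \<kappa> n)"
        using elim \<kappa>_pos[of n] unfolding r_def by (simp add: field_simps)
      then show ?case using pw(7)[OF elim \<kappa>_pos[of n]] by simp
    qed
    show "eventually (\<lambda>n. e1 (p n) (\<kappa> n) \<le> 1) sequentially"
      using E by eventually_elim (use core(5) \<kappa>_pos in auto)
  qed
  show "(\<lambda>n. e2t (p n) (\<kappa> n)) \<in> O[sequentially](\<lambda>n. real (p n) / (\<kappa> n)\<^sup>2)"
  proof (rule bigoI[where c=4])
    show "eventually (\<lambda>n. norm (e2t (p n) (\<kappa> n)) \<le> 4 * norm (real (p n) / (\<kappa> n)\<^sup>2)) sequentially"
      using E r2
    proof eventually_elim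
      case (elim n)
      define k where "k = \<kappa> n"
      have k: "0 < k" using \<kappa>_pos k_def by simp
      have pp: "real (p n) \<ge> 4" using elim by simp
      have kp: "k \<ge> 2 * real (p n)" using elim(2) pp k unfolding r_def k_def by (simp add: field_simps)
      have B: "k / (real (p n) + 2 + k) \<le> e1 (p n + 2) k" using pw(8)[OF elim(1) k] .
      have "1/2 \<le> k / (real (p n) + 2 + k)" using kp pp k by (simp add: field_simps)
      then have Bh: "1/2 \<le> e1 (p n + 2) k" using B by linarith
      have "k / 2 \<le> k * e1 (p n + 2) k" using Bh k by (simp add: field_simps)
      then have "(k/2)\<^sup>2 \<le> (k * e1 (p n + 2) k)\<^sup>2" using k by (intro power_mono) auto
      moreover have "0 < (k/2)\<^sup>2" using k by simp
      ultimately have "real (p n) / (k * e1 (p n + 2) k)\<^sup>2 \<le> real (p n) / (k/2)\<^sup>2"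
        using k pp by (intro divide_left_mono mult_pos_pos) auto
      also have "\<dots> = 4 * (real (p n) / k\<^sup>2)" by (simp add: power2_eq_square field_simps)
      finally have "e2t (p n) k \<le> 4 * (real (p n) / k\<^sup>2)" using pw(9)[OF elim(1) k] by linarith
      moreover have "0 \<le> e2t (p n) k" using core(6)[OF elim(1) k] .
      ultimately show ?case unfolding k_def[symmetric] using k by simp
    qed
  qed
  show "(\<lambda>n. f2 (p n) (\<kappa> n) - real (p n) / \<kappa> n) \<in> o[sequentially](\<lambda>n. real (p n) / \<kappa> n)"
  proof (rule smalloI_tendsto)
    have "((\<lambda>n. e1 (p n) (\<kappa> n) - e1 (p n) (\<kappa> n) * (1 / real (p n)) - 1) \<longlonglongrightarrow> 1 - 1 * 0 - 1)"
      by (intro tendsto_diff tendsto_mult A1 inv_p0[OF p_div] tendsto_const)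
    then have "((\<lambda>n. e1 (p n) (\<kappa> n) - e1 (p n) (\<kappa> n) * (1 / real (p n)) - 1) \<longlonglongrightarrow> 0)" by simp
    moreover have "eventually (\<lambda>n. e1 (p n) (\<kappa> n) - e1 (p n) (\<kappa> n) * (1 / real (p n)) - 1 =
        (f2 (p n) (\<kappa> n) - real (p n) / \<kappa> n) / (real (p n) / \<kappa> n)) sequentially"
      using E
    proof eventually_elim
      case (elim n)
      show ?case unfolding pw(6)[OF elim \<kappa>_pos[of n]] using elim \<kappa>_pos[of n]
        by (simp add: field_simps)
    qed
    ultimately show "((\<lambda>n. (f2 (p n) (\<kappa> n) - real (p n) / \<kappa> n) / (real (p n) / \<kappa> n)) \<longlonglongrightarrow> 0)"
      using tendsto_cong by fastforce
    show "eventually (\<lambda>n. real (p n) / \<kappa> n \<noteq> 0) sequentially"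
      using E by eventually_elim (use \<kappa>_pos in \<open>auto simp: less_imp_neq[symmetric]\<close>)
  qed
qed

lemma Ub_tendsto:
  assumes "(f \<longlonglongrightarrow> b)" "b > 0"
  shows "((\<lambda>n. Ub (f n)) \<longlonglongrightarrow> Ub b)"
  unfolding Ub_def
proof (intro tendsto_divide tendsto_add tendsto_const assms tendsto_real_sqrt tendsto_power)
  have h: "b\<^sup>2 + 4 > 0" by (simp add: add_nonneg_pos)
  have s: "sqrt (b\<^sup>2 + 4) > 0" using real_sqrt_gt_zero[OF h] .
  show "b + sqrt (b\<^sup>2 + 4) \<noteq> 0" using s assms(2) by linarith
qed

lemma xi_ids:
  fixes \<xi> c :: real
  assumes "\<xi> > 0"
  assumes c_def: "c = 1/2 + sqrt (1/4 + \<xi>\<^sup>2)"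
  shows "Ub (1/\<xi>) = \<xi> / c" and "1 / (1/\<xi> + \<xi>/c) = \<xi> / c" and "1/\<xi> * (\<xi>/c) = 1/c"
proof -
  define R where "R = sqrt (1/4 + \<xi>\<^sup>2)"
  have R0: "R > 0" unfolding R_def by (simp add: add_pos_nonneg)
  have R2: "R\<^sup>2 = 1/4 + \<xi>\<^sup>2" unfolding R_def by (simp add: add_nonneg_nonneg)
  have c: "c = 1/2 + R" unfolding c_def R_def ..
  have xi: "\<xi> > 0" by fact
  have cpos: "c > 0" using c R0 by simp
  have sq: "sqrt ((1/\<xi>)\<^sup>2 + 4) = 2*R/\<xi>"
  proof -
    have "(1/\<xi>)\<^sup>2 + 4 = (2*R/\<xi>)\<^sup>2" using R2 assms by (simp add: field_simps power2_eq_square)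
    then show ?thesis using R0 assms by simp
  qed
  show "Ub (1/\<xi>) = \<xi> / c" unfolding Ub_def sq c using xi R0 by (simp add: field_simps)
  have cc: "c\<^sup>2 = c + \<xi>\<^sup>2" unfolding c using R2 by (simp add: power2_eq_square algebra_simps)
  show "1 / (1/\<xi> + \<xi>/c) = \<xi> / c"
  proof -
    have "1/\<xi> + \<xi>/c = (c + \<xi>\<^sup>2) / (\<xi> * c)" using xi cpos by (simp add: field_simps power2_eq_square)
    also have "\<dots> = c / \<xi>" unfolding cc[symmetric] using xi cpos by (simp add: power2_eq_square)
    finally show ?thesis by simp
  qed
  show "1/\<xi> * (\<xi>/c) = 1/c" using xi by simp
qed

lemma regime_ii:
  fixes p :: "nat \<Rightarrow> nat" and \<kappa> :: "nat \<Rightarrow> real"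
  assumes p_div: "filterlim p at_top sequentially"
    and \<kappa>_pos: "\<And>n. \<kappa> n > 0"
    and xi: "\<xi> > 0" and rxi: "((\<lambda>n. \<kappa> n / real (p n)) \<longlonglongrightarrow> \<xi>)"
  shows "(\<lambda>n. e1 (p n) (\<kappa> n)) \<longlonglongrightarrow> \<xi> / (1/2 + sqrt (1/4 + \<xi>\<^sup>2))"
    and "(\<lambda>n. e2t (p n) (\<kappa> n)) \<in> O[sequentially](\<lambda>n. 1 / real (p n))"
    and "(\<lambda>n. f2 (p n) (\<kappa> n)) \<longlonglongrightarrow> 1 / (1/2 + sqrt (1/4 + \<xi>\<^sup>2))"
proof -
  note E = ev4[OF p_div]
  define c where "c = 1/2 + sqrt (1/4 + \<xi>\<^sup>2)"
  note ids = xi_ids[OF xi c_def]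
  have cpos: "c > 0" unfolding c_def by (simp add: add_pos_nonneg)
  have s: "((\<lambda>n. real (p n) / \<kappa> n) \<longlonglongrightarrow> 1/\<xi>)"
  proof -
    have "((\<lambda>n. inverse (\<kappa> n / real (p n))) \<longlonglongrightarrow> inverse \<xi>)"
      using tendsto_inverse[OF rxi] xi by simp
    then show ?thesis by (simp add: inverse_eq_divide)
  qed
  have ik: "((\<lambda>n. 1 / \<kappa> n) \<longlonglongrightarrow> 0)"
  proof -
    have "((\<lambda>n. real (p n) / \<kappa> n * (1 / real (p n))) \<longlonglongrightarrow> 1/\<xi> * 0)"
      by (intro tendsto_mult s inv_p0[OF p_div])
    moreover have "eventually (\<lambda>n. real (p n) / \<kappa> n * (1 / real (p n)) = 1 / \<kappa> n) sequentially"
      using E by eventually_elim simp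
    ultimately show ?thesis using tendsto_cong by fastforce
  qed
  have b1: "((\<lambda>n. (real (p n) - 1) / \<kappa> n) \<longlonglongrightarrow> 1/\<xi>)"
    using tendsto_diff[OF s ik] by (simp add: diff_divide_distrib)
  have b2: "((\<lambda>n. (real (p n) + 1) / \<kappa> n) \<longlonglongrightarrow> 1/\<xi>)"
    using tendsto_add[OF s ik] by (simp add: add_divide_distrib)
  have xi': "1/\<xi> > 0" using xi by simp
  have up: "((\<lambda>n. Ub ((real (p n) - 1) / \<kappa> n)) \<longlonglongrightarrow> \<xi>/c)"
    using Ub_tendsto[OF b1 xi'] ids(1) by simp
  have lo: "((\<lambda>n. 1 / (real (p n) / \<kappa> n + Ub ((real (p n) + 1) / \<kappa> n))) \<longlonglongrightarrow> \<xi>/c)"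
  proof -
    have "((\<lambda>n. 1 / (real (p n) / \<kappa> n + Ub ((real (p n) + 1) / \<kappa> n))) \<longlonglongrightarrow> 1 / (1/\<xi> + Ub (1/\<xi>)))"
    proof (rule tendsto_divide[OF tendsto_const tendsto_add[OF s Ub_tendsto[OF b2 xi']]])
      have "0 < 1/\<xi> + \<xi>/c" using xi cpos by (intro add_pos_pos divide_pos_pos) auto
      then show "1/\<xi> + Ub (1/\<xi>) \<noteq> 0" using ids(1) by simp
    qed
    then show ?thesis using ids(1,2) by simp
  qed
  show A: "(\<lambda>n. e1 (p n) (\<kappa> n)) \<longlonglongrightarrow> \<xi> / (1/2 + sqrt (1/4 + \<xi>\<^sup>2))"
    unfolding c_def[symmetric]
  proof (rule tendsto_sandwich[OF _ _ lo up])
    show "eventually (\<lambda>n. 1 / (real (p n) / \<kappa> n + Ub ((real (p n) + 1) / \<kappa> n)) \<le> e1 (p n) (\<kappa> n)) sequentially"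
      using E by eventually_elim (use pw(11) \<kappa>_pos in auto)
    show "eventually (\<lambda>n. e1 (p n) (\<kappa> n) \<le> Ub ((real (p n) - 1) / \<kappa> n)) sequentially"
      using E by eventually_elim (use pw(10) \<kappa>_pos in auto)
  qed
  show "(\<lambda>n. e2t (p n) (\<kappa> n)) \<in> O[sequentially](\<lambda>n. 1 / real (p n))"
  proof (rule bigoI[where c=1])
    show "eventually (\<lambda>n. norm (e2t (p n) (\<kappa> n)) \<le> 1 * norm (1 / real (p n))) sequentially"
      using E
    proof eventually_elim
      case (elim n)
      have "0 \<le> e2t (p n) (\<kappa> n)" using core(6)[OF elim \<kappa>_pos[of n]] .
      moreover have "e2t (p n) (\<kappa> n) \<le> 1 / real (p n)" using var_le(2)[OF elim \<kappa>_pos[of n]] .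
      ultimately show ?case by simp
    qed
  qed
  show "(\<lambda>n. f2 (p n) (\<kappa> n)) \<longlonglongrightarrow> 1 / (1/2 + sqrt (1/4 + \<xi>\<^sup>2))"
    unfolding c_def[symmetric]
  proof -
    have "((\<lambda>n. (real (p n) - 1) / \<kappa> n * e1 (p n) (\<kappa> n)) \<longlonglongrightarrow> 1/\<xi> * (\<xi>/c))"
      by (intro tendsto_mult b1 A[folded c_def])
    moreover have "eventually (\<lambda>n. (real (p n) - 1) / \<kappa> n * e1 (p n) (\<kappa> n) = f2 (p n) (\<kappa> n)) sequentially"
      using E by eventually_elim (use pw(6) \<kappa>_pos in auto)
    ultimately show "(\<lambda>n. f2 (p n) (\<kappa> n)) \<longlonglongrightarrow> 1/c" using tendsto_cong ids(3) by fastforce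
  qed
qed


theorem lemmaA4:
  fixes p :: "nat \<Rightarrow> nat" and \<kappa> :: "nat \<Rightarrow> real"
  assumes p_div: "filterlim p at_top sequentially"
    and \<kappa>_pos: "\<And>n. \<kappa> n > 0"
  shows
   "(filterlim (\<lambda>n. \<kappa> n / real (p n)) at_top sequentially \<longrightarrow>
       (\<lambda>n. e1 (p n) (\<kappa> n)) \<longlonglongrightarrow> 1 \<and>
       (\<lambda>n. e2t (p n) (\<kappa> n)) \<in> O[sequentially](\<lambda>n. real (p n) / (\<kappa> n)\<^sup>2) \<and>
       (\<lambda>n. f2 (p n) (\<kappa> n) - real (p n) / \<kappa> n) \<in> o[sequentially](\<lambda>n. real (p n) / \<kappa> n))
    \<and>
    (\<forall>\<xi>>0. ((\<lambda>n. \<kappa> n / real (p n)) \<longlonglongrightarrow> \<xi>) \<longrightarrow>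
       (let c = 1/2 + sqrt (1/4 + \<xi>\<^sup>2) in
        (\<lambda>n. e1 (p n) (\<kappa> n)) \<longlonglongrightarrow> \<xi> / c \<and>
        (\<lambda>n. e2t (p n) (\<kappa> n)) \<in> O[sequentially](\<lambda>n. 1 / real (p n)) \<and>
        (\<lambda>n. f2 (p n) (\<kappa> n)) \<longlonglongrightarrow> 1 / c))
    \<and>
    (((\<lambda>n. \<kappa> n / real (p n)) \<longlonglongrightarrow> 0) \<longrightarrow>
       (\<lambda>n. e1 (p n) (\<kappa> n) - \<kappa> n / real (p n)) \<in> O[sequentially](\<lambda>n. (\<kappa> n / real (p n)) ^ 3) \<and>
       (\<lambda>n. e2t (p n) (\<kappa> n) - 1 / real (p n)) \<in> o[sequentially](\<lambda>n. 1 / real (p n)) \<and>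
       (\<lambda>n. f2 (p n) (\<kappa> n)) \<longlonglongrightarrow> 1)"
proof -
  have i: "filterlim (\<lambda>n. \<kappa> n / real (p n)) at_top sequentially \<longrightarrow>
       (\<lambda>n. e1 (p n) (\<kappa> n)) \<longlonglongrightarrow> 1 \<and>
       (\<lambda>n. e2t (p n) (\<kappa> n)) \<in> O[sequentially](\<lambda>n. real (p n) / (\<kappa> n)\<^sup>2) \<and>
       (\<lambda>n. f2 (p n) (\<kappa> n) - real (p n) / \<kappa> n) \<in> o[sequentially](\<lambda>n. real (p n) / \<kappa> n)"
    using regime_i[of p \<kappa>, OF p_div \<kappa>_pos] by blast
  have ii: "\<forall>\<xi>>0. ((\<lambda>n. \<kappa> n / real (p n)) \<longlonglongrightarrow> \<xi>) \<longrightarrow>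
       (let c = 1/2 + sqrt (1/4 + \<xi>\<^sup>2) in
        (\<lambda>n. e1 (p n) (\<kappa> n)) \<longlonglongrightarrow> \<xi> / c \<and>
        (\<lambda>n. e2t (p n) (\<kappa> n)) \<in> O[sequentially](\<lambda>n. 1 / real (p n)) \<and>
        (\<lambda>n. f2 (p n) (\<kappa> n)) \<longlonglongrightarrow> 1 / c)"
    unfolding Let_def using regime_ii[of p \<kappa>, OF p_div \<kappa>_pos] by blast
  have iii: "((\<lambda>n. \<kappa> n / real (p n)) \<longlonglongrightarrow> 0) \<longrightarrow>
       (\<lambda>n. e1 (p n) (\<kappa> n) - \<kappa> n / real (p n)) \<in> O[sequentially](\<lambda>n. (\<kappa> n / real (p n)) ^ 3) \<and>
       (\<lambda>n. e2t (p n) (\<kappa> n) - 1 / real (p n)) \<in> o[sequentially](\<lambda>n. 1 / real (p n)) \<and>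
       (\<lambda>n. f2 (p n) (\<kappa> n)) \<longlonglongrightarrow> 1"
    using regime_iii[of p \<kappa>, OF p_div \<kappa>_pos] by blast
  show ?thesis using i ii iii by blast
qed

end
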